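(* For every $i\in[d]$, all $r\in[m]$, any constant $c_1\ge10$, and every $x_{1:i}$ with $\|x_{1:i}\|_2\le\frac12$, with probability at least $1-\frac1{c_1}$ over the random initialization, the change in weights after $t$ SGD steps with learning rate $\eta$ satisfies $$\|w^{(t)}_{i,r}\|_2\le\eta\bar\Lambda t,\qquad |b^{(t)}_{i,r}|\le\eta\bar\Lambda t,\qquad\text{where }\bar\Lambda=6c_1\epsilon_a\sqrt{2\log m}.$$
   Context: UNF setting. Fix $d\ge1$, $m\ge2$, $\epsilon_a>0$, $Q\ge1$. For $\|x_{1:i}\|_2\le1$, $\hat x_{1:i}=(x_1,\dots,x_i,\sqrt{1-\|x_{1:i}\|_2^2})$. $\sigma(u)=\max\{u,0\}$ with $\sigma'(u)=\mathbf 1\{u\ge0\}$; $\phi(u)=e^u$ ($u<0$), $u+1$ ($u\ge0$). Frozen random initial parameters $a_{i,r}\sim\mathcal N(0,\epsilon_a^2)$, $\bar w_{i,r}\sim\mathcal N(0,\frac1mI_{i+1})$, $\bar b_{i,r}\sim\mathcal N(0,\frac1m)$, independent. Offsets $\theta_i=(w_{i,r},b_{i,r})_{r\in[m]}$, $\theta^{(0)}=0$. $N(x_{1:i};\theta_i)=\sum_ra_{i,r}\sigma(\langle\bar w_{i,r}+w_{i,r},\hat x_{1:i}\rangle+\bar b_{i,r}+b_{i,r})$, $\frac{\partial f_i}{\partial x_i}=\phi(N(\cdot;\theta_i))$. Quadrature: $\Delta_{x_i}=(x_i+1)/Q$, $q^{(j)}_i=(x_1,\dots,x_{i-1},-1+j\Delta_{x_i})$.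 Approximate loss $\tilde L(\nabla f,x)=\sum_{i}\big(\sum_{j=1}^Q\Delta_{x_i}\phi(N(q^{(j)}_i;\theta_i))-\log\phi(N(x_{1:i};\theta_i))\big)$. SGD: $\theta^{(t+1)}=\theta^{(t)}-\eta\nabla_\theta\tilde L(\nabla f^{(t)},x^{(t)})$ with $x^{(t)}$ drawn uniformly from a training set of points in the unit ball, where $f^{(t)}$ uses $\theta^{(t)}$; $w^{(t)}_{i,r},b^{(t)}_{i,r}$ are the components of $\theta^{(t)}$. *)

theory Defs
  imports "HOL-Probability.Probability"
begin

text \<open>Coordinates of the frozen random initialisation:
  A i r = a_{i,r};  W i r k = k-th component (k = 1..i+1) of wbar_{i,r};  B i r = bbar_{i,r}.\<close>
datatype coord = A nat nat | W nat nat nat | B nat nat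

definition init_coords :: "nat \<Rightarrow> nat \<Rightarrow> coord set" where
  "init_coords d m =
     {A i r | i r. i \<in> {1..d} \<and> r \<in> {1..m}} \<union>
     {W i r k | i r k. i \<in> {1..d} \<and> r \<in> {1..m} \<and> k \<in> {1..i+1}} \<union>
     {B i r | i r. i \<in> {1..d} \<and> r \<in> {1..m}}"

text \<open>Law of the initialisation: independent Gaussians (normal_density mu sigma, sigma = std. dev.):
  a ~ N(0, eps_a^2), wbar components ~ N(0, 1/m), bbar ~ N(0, 1/m).\<close>
definition init_measure :: "nat \<Rightarrow> nat \<Rightarrow> real \<Rightarrow> (coord \<Rightarrow> real) measure" where
  "init_measure d m eps_a =
     PiM (init_coords d m)
       (\<lambda>c. case c of
          A _ _ \<Rightarrow> density lborel (normal_density 0 eps_a)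
        | W _ _ _ \<Rightarrow> density lborel (normal_density 0 (1 / sqrt (real m)))
        | B _ _ \<Rightarrow> density lborel (normal_density 0 (1 / sqrt (real m))))"

definition relu :: "real \<Rightarrow> real" where "relu u = max u 0"
definition relu' :: "real \<Rightarrow> real" where "relu' u = (if u \<ge> 0 then 1 else 0)"
definition phi :: "real \<Rightarrow> real" where "phi u = (if u < 0 then exp u else u + 1)"
definition phi' :: "real \<Rightarrow> real" where "phi' u = (if u < 0 then exp u else 1)"

text \<open>Points are x :: nat => real with coordinates x 1, ..., x d.
  hat i x = (x_1,...,x_i, sqrt(1 - ||x_{1:i}||^2)), as a function on indices 1..i+1.\<close>
definition hat :: "nat \<Rightarrow> (nat \<Rightarrow> real) \<Rightarrow> nat \<Rightarrow> real" where
  "hat i x k = (if k \<le> i then x k else sqrt (1 - (\<Sum>l=1..i. (x l)^2)))"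

text \<open>Parameters (offsets): (w, b) with w i r k (k = 1..i+1) and b i r.\<close>
type_synonym params = "(nat \<Rightarrow> nat \<Rightarrow> nat \<Rightarrow> real) \<times> (nat \<Rightarrow> nat \<Rightarrow> real)"

definition preact :: "nat \<Rightarrow> (coord \<Rightarrow> real) \<Rightarrow> params \<Rightarrow> nat \<Rightarrow> nat \<Rightarrow> (nat \<Rightarrow> real) \<Rightarrow> real" where
  "preact m \<omega> \<theta> i r x =
     (\<Sum>k=1..i+1. (\<omega> (W i r k) + fst \<theta> i r k) * hat i x k) + \<omega> (B i r) + snd \<theta> i r"

definition Nnet :: "nat \<Rightarrow> (coord \<Rightarrow> real) \<Rightarrow> params \<Rightarrow> nat \<Rightarrow> (nat \<Rightarrow> real) \<Rightarrow> real" where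
  "Nnet m \<omega> \<theta> i x = (\<Sum>r=1..m. \<omega> (A i r) * relu (preact m \<omega> \<theta> i r x))"

definition Delta :: "nat \<Rightarrow> nat \<Rightarrow> (nat \<Rightarrow> real) \<Rightarrow> real" where
  "Delta Q i x = (x i + 1) / real Q"

definition qnode :: "nat \<Rightarrow> nat \<Rightarrow> (nat \<Rightarrow> real) \<Rightarrow> nat \<Rightarrow> nat \<Rightarrow> real" where
  "qnode Q i x j = x(i := -1 + real j * Delta Q i x)"

definition Ltilde :: "nat \<Rightarrow> nat \<Rightarrow> nat \<Rightarrow> (coord \<Rightarrow> real) \<Rightarrow> params \<Rightarrow> (nat \<Rightarrow> real) \<Rightarrow> real" where
  "Ltilde d m Q \<omega> \<theta> x =
     (\<Sum>i=1..d. (\<Sum>j=1..Q. Delta Q i x * phi (Nnet m \<omega> \<theta> i (qnode Q i x j)))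
                - ln (phi (Nnet m \<omega> \<theta> i x)))"

text \<open>Its gradient with respect to w_{i,r,k} and b_{i,r}, computed by the chain rule with the
  conventions sigma'(u) = 1{u >= 0} and phi' as above (only the i-th summand depends on theta_i).\<close>
definition grad_w :: "nat \<Rightarrow> nat \<Rightarrow> (coord \<Rightarrow> real) \<Rightarrow> params \<Rightarrow> (nat \<Rightarrow> real) \<Rightarrow> nat \<Rightarrow> nat \<Rightarrow> nat \<Rightarrow> real" where
  "grad_w m Q \<omega> \<theta> x i r k =
     (\<Sum>j=1..Q. Delta Q i x * phi' (Nnet m \<omega> \<theta> i (qnode Q i x j)) * \<omega> (A i r)
                 * relu' (preact m \<omega> \<theta> i r (qnode Q i x j)) * hat i (qnode Q i x j) k)
     - phi' (Nnet m \<omega> \<theta> i x) / phi (Nnet m \<omega> \<theta> i x) * \<omega> (A i r)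
                 * relu' (preact m \<omega> \<theta> i r x) * hat i x k"

definition grad_b :: "nat \<Rightarrow> nat \<Rightarrow> (coord \<Rightarrow> real) \<Rightarrow> params \<Rightarrow> (nat \<Rightarrow> real) \<Rightarrow> nat \<Rightarrow> nat \<Rightarrow> real" where
  "grad_b m Q \<omega> \<theta> x i r =
     (\<Sum>j=1..Q. Delta Q i x * phi' (Nnet m \<omega> \<theta> i (qnode Q i x j)) * \<omega> (A i r)
                 * relu' (preact m \<omega> \<theta> i r (qnode Q i x j)))
     - phi' (Nnet m \<omega> \<theta> i x) / phi (Nnet m \<omega> \<theta> i x) * \<omega> (A i r)
                 * relu' (preact m \<omega> \<theta> i r x)"

primrec sgd :: "nat \<Rightarrow> nat \<Rightarrow> real \<Rightarrow> (coord \<Rightarrow> real) \<Rightarrow> (nat \<Rightarrow> nat \<Rightarrow> real) \<Rightarrow> nat \<Rightarrow> params" where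
  "sgd m Q \<eta> \<omega> xs 0 = ((\<lambda>i r k. 0), (\<lambda>i r. 0))"
| "sgd m Q \<eta> \<omega> xs (Suc t) =
     (let \<theta> = sgd m Q \<eta> \<omega> xs t in
       ((\<lambda>i r k. fst \<theta> i r k - \<eta> * grad_w m Q \<omega> \<theta> (xs t) i r k),
        (\<lambda>i r. snd \<theta> i r - \<eta> * grad_b m Q \<omega> \<theta> (xs t) i r)))"

end

theory Submission
  imports Defs
begin


lemma L2_scale: "L2_set (\<lambda>k. c * f k) S = \<bar>c\<bar> * L2_set f S"
  unfolding L2_set_def by (simp add: power_mult_distrib real_sqrt_mult flip: sum_distrib_left)

lemma L2_minus: "L2_set (\<lambda>k. - f k) S = L2_set f S"
  unfolding L2_set_def by simp

lemma L2_diff: "L2_set (\<lambda>k. f k - g k) S \<le> L2_set f S + L2_set g S"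
  using L2_set_triangle_ineq[of f "\<lambda>k. - g k" S] by (simp add: L2_minus)

lemma L2_sum: "finite J \<Longrightarrow> L2_set (\<lambda>k. \<Sum>j\<in>J. f j k) S \<le> (\<Sum>j\<in>J. L2_set (f j) S)"
proof (induction J rule: finite_induct)
  case empty then show ?case by (simp add: L2_set_0')
next
  case (insert a J)
  have "L2_set (\<lambda>k. \<Sum>j\<in>insert a J. f j k) S = L2_set (\<lambda>k. f a k + (\<Sum>j\<in>J. f j k)) S"
    using insert by simp
  also have "\<dots> \<le> L2_set (f a) S + L2_set (\<lambda>k. \<Sum>j\<in>J. f j k) S" by (rule L2_set_triangle_ineq)
  also have "\<dots> \<le> L2_set (f a) S + (\<Sum>j\<in>J. L2_set (f j) S)" using insert by simp
  finally show ?case using insert by simp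
qed

lemma sqrt_sq_abs: "(sqrt z)^2 = \<bar>z\<bar>"
proof (cases "z \<ge> 0")
  case False
  have "sqrt z = - sqrt (-z)" using real_sqrt_minus[of "-z"] by simp
  hence "(sqrt z)^2 = (sqrt (-z))^2" by simp
  also have "\<dots> = - z" using False by simp
  finally show ?thesis using False by simp
qed simp

lemma hat_L2:
  assumes "(\<Sum>l=1..i. (y l)^2) \<le> 3/2"
  shows "L2_set (hat i y) {1..i+1} \<le> 2"
proof -
  let ?S = "\<Sum>l=1..i. (y l)^2"
  have "(\<Sum>k=1..i+1. (hat i y k)^2) = (\<Sum>k=1..i. (hat i y k)^2) + (hat i y (i+1))^2"
    by simp
  also have "(\<Sum>k=1..i. (hat i y k)^2) = ?S" by (rule sum.cong) (auto simp: hat_def)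
  also have "(hat i y (i+1))^2 = \<bar>1 - ?S\<bar>" by (simp add: hat_def sqrt_sq_abs)
  finally have e: "(\<Sum>k=1..i+1. (hat i y k)^2) = ?S + \<bar>1 - ?S\<bar>" .
  have "?S \<ge> 0" by (simp add: sum_nonneg)
  hence "?S + \<bar>1 - ?S\<bar> \<le> 4" using assms by linarith
  hence "sqrt (?S + \<bar>1 - ?S\<bar>) \<le> sqrt 4" by (rule real_sqrt_le_mono)
  thus ?thesis unfolding L2_set_def e by simp
qed

lemma phi'_le: "0 \<le> phi' u \<and> phi' u \<le> 1"
  by (auto simp: phi'_def)

lemma phi_ratio: "0 \<le> phi' u / phi u \<and> phi' u / phi u \<le> 1"
  by (auto simp: phi'_def phi_def)

lemma relu'_le: "0 \<le> relu' u \<and> relu' u \<le> 1"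
  by (auto simp: relu'_def)

lemma abs_c_le: "\<bar>D * phi' u * a * relu' v\<bar> \<le> D * \<bar>a\<bar>" if "D \<ge> 0" for D a u v
proof -
  have "\<bar>D * phi' u * a * relu' v\<bar> = D * phi' u * \<bar>a\<bar> * relu' v"
    using that phi'_le[of u] relu'_le[of v] by (simp add: abs_mult)
  also have "\<dots> \<le> D * 1 * \<bar>a\<bar> * 1"
    using that phi'_le[of u] relu'_le[of v]
    by (intro mult_mono mult_nonneg_nonneg) auto
  finally show ?thesis by simp
qed

lemma phi_pos: "phi u > 0" by (auto simp: phi_def)

lemma abs_c0_le: "\<bar>phi' u / phi u * a * relu' v\<bar> \<le> \<bar>a\<bar>" for a u v
proof -
  have "\<bar>phi' u / phi u * a * relu' v\<bar> = phi' u / phi u * \<bar>a\<bar> * relu' v"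
    using phi_ratio[of u] relu'_le[of v] phi_pos[of u] phi'_le[of u] by (simp add: abs_mult)
  also have "\<dots> \<le> 1 * \<bar>a\<bar> * 1"
    using phi_ratio[of u] relu'_le[of v]
    by (intro mult_mono mult_nonneg_nonneg) auto
  finally show ?thesis by simp
qed

lemma qnode_sq:
  fixes x :: "nat \<Rightarrow> real" and v :: real
  assumes "i \<ge> 1" "(\<Sum>l=1..i. (x l)^2) \<le> 1/4" "v^2 \<le> 1"
  shows "(\<Sum>l=1..i. ((x(i := v)) l)^2) \<le> 3/2"
proof -
  have "(\<Sum>l=1..i. ((x(i := v)) l)^2) = v^2 + (\<Sum>l\<in>{1..i}-{i}. ((x(i := v)) l)^2)"
  proof -
    have "(\<Sum>l=1..i. ((x(i := v)) l)^2) = ((x(i := v)) i)^2 + (\<Sum>l\<in>{1..i}-{i}. ((x(i := v)) l)^2)"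
      by (rule sum.remove) (use assms(1) in auto)
    thus ?thesis by simp
  qed
  also have "(\<Sum>l\<in>{1..i}-{i}. ((x(i := v)) l)^2) = (\<Sum>l\<in>{1..i}-{i}. (x l)^2)"
    by (rule sum.cong) auto
  also have "\<dots> \<le> (\<Sum>l=1..i. (x l)^2)"
    by (rule sum_mono2) auto
  finally show ?thesis using assms by linarith
qed

lemma grad_bounds:
  assumes "i \<ge> 1" "Q \<ge> 1" "(\<Sum>l=1..i. (x l)^2) \<le> 1/4"
  shows "L2_set (grad_w m Q \<omega> \<theta> x i r) {1..i+1} \<le> 6 * \<bar>\<omega> (A i r)\<bar>"
    and "\<bar>grad_b m Q \<omega> \<theta> x i r\<bar> \<le> 6 * \<bar>\<omega> (A i r)\<bar>"
proof -
  define a where "a = \<omega> (A i r)"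
  define D where "D = Delta Q i x"
  have "(x i)^2 \<le> (\<Sum>l=1..i. (x l)^2)"
    using assms(1) by (intro member_le_sum) auto
  hence "(x i)^2 \<le> 1/4" using assms(3) by linarith
  moreover have "(1/2::real)^2 = 1/4" by (simp add: power2_eq_square)
  ultimately have "\<bar>x i\<bar>^2 \<le> (1/2)^2" by simp
  hence xi: "\<bar>x i\<bar> \<le> 1/2" by (rule power2_le_imp_le) simp
  have QD: "real Q * D = x i + 1" using assms(2) by (simp add: D_def Delta_def)
  have D0: "D \<ge> 0" using xi assms(2) by (simp add: D_def Delta_def)
  have vsq: "(-1 + real j * D)^2 \<le> 1" if "j \<in> {1..Q}" for j
  proof -
    have "real j * D \<le> real Q * D" using that D0 by (intro mult_right_mono) auto
    moreover have "real j * D \<ge> 0" using D0 by simp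
    ultimately have "\<bar>-1 + real j * D\<bar> \<le> 1" using QD xi by auto
    hence "\<bar>-1 + real j * D\<bar>^2 \<le> 1^2" by (intro power_mono) auto
    thus ?thesis by simp
  qed
  have hq: "L2_set (hat i (qnode Q i x j)) {1..i+1} \<le> 2" if "j \<in> {1..Q}" for j
    unfolding qnode_def D_def[symmetric]
    by (rule hat_L2, rule order_trans[OF qnode_sq[OF assms(1) assms(3) vsq[OF that]]]) simp
  have hx: "L2_set (hat i x) {1..i+1} \<le> 2"
    by (rule hat_L2) (use assms(3) in simp)
  define cj where "cj j = D * phi' (Nnet m \<omega> \<theta> i (qnode Q i x j)) * a
                 * relu' (preact m \<omega> \<theta> i r (qnode Q i x j))" for j
  define c0 where "c0 = phi' (Nnet m \<omega> \<theta> i x) / phi (Nnet m \<omega> \<theta> i x) * a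
                 * relu' (preact m \<omega> \<theta> i r x)"
  have cj: "\<bar>cj j\<bar> \<le> D * \<bar>a\<bar>" for j unfolding cj_def by (rule abs_c_le[OF D0])
  have c0: "\<bar>c0\<bar> \<le> \<bar>a\<bar>" unfolding c0_def by (rule abs_c0_le)
  have gw: "grad_w m Q \<omega> \<theta> x i r = (\<lambda>k. (\<Sum>j=1..Q. cj j * hat i (qnode Q i x j) k) - c0 * hat i x k)"
    by (simp add: grad_w_def cj_def c0_def a_def D_def fun_eq_iff)
  have gb: "grad_b m Q \<omega> \<theta> x i r = (\<Sum>j=1..Q. cj j) - c0"
    by (simp add: grad_b_def cj_def c0_def a_def D_def)
  have sumD: "(\<Sum>j=1..Q. D * \<bar>a\<bar>) = (x i + 1) * \<bar>a\<bar>"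
    using QD by simp
  have "L2_set (grad_w m Q \<omega> \<theta> x i r) {1..i+1}
      \<le> L2_set (\<lambda>k. \<Sum>j=1..Q. cj j * hat i (qnode Q i x j) k) {1..i+1} + L2_set (\<lambda>k. c0 * hat i x k) {1..i+1}"
    unfolding gw by (rule L2_diff)
  also have "\<dots> \<le> (\<Sum>j=1..Q. D * \<bar>a\<bar> * 2) + \<bar>a\<bar> * 2"
  proof -
    have A1: "L2_set (\<lambda>k. \<Sum>j=1..Q. cj j * hat i (qnode Q i x j) k) {1..i+1}
        \<le> (\<Sum>j=1..Q. L2_set (\<lambda>k. cj j * hat i (qnode Q i x j) k) {1..i+1})"
      by (rule L2_sum) simp
    have A2: "L2_set (\<lambda>k. c0 * hat i x k) {1..i+1} \<le> \<bar>a\<bar> * 2"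
      unfolding L2_scale by (rule mult_mono[OF c0 hx]) auto
    have A3: "(\<Sum>j=1..Q. L2_set (\<lambda>k. cj j * hat i (qnode Q i x j) k) {1..i+1}) \<le> (\<Sum>j=1..Q. D * \<bar>a\<bar> * 2)"
    proof (rule sum_mono)
      fix j assume j: "j \<in> {1..Q}"
      show "L2_set (\<lambda>k. cj j * hat i (qnode Q i x j) k) {1..i+1} \<le> D * \<bar>a\<bar> * 2"
        unfolding L2_scale using cj[of j] hq[OF j]
        by (intro mult_mono) auto
    qed
    show ?thesis using A1 A2 A3 by linarith
  qed
  also have "\<dots> = (x i + 1) * \<bar>a\<bar> * 2 + \<bar>a\<bar> * 2"
  proof -
    have "(\<Sum>j=1..Q. D * \<bar>a\<bar> * 2) = (real Q * D) * \<bar>a\<bar> * 2" by (simp add: mult.assoc)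
    thus ?thesis unfolding QD by simp
  qed
  also have "\<dots> \<le> 6 * \<bar>a\<bar>"
  proof -
    have "(x i + 1) * \<bar>a\<bar> \<le> (3/2) * \<bar>a\<bar>" by (rule mult_right_mono) (use xi in auto)
    thus ?thesis by linarith
  qed
  finally show "L2_set (grad_w m Q \<omega> \<theta> x i r) {1..i+1} \<le> 6 * \<bar>\<omega> (A i r)\<bar>"
    by (simp add: a_def)
  have B1: "\<bar>grad_b m Q \<omega> \<theta> x i r\<bar> \<le> \<bar>\<Sum>j=1..Q. cj j\<bar> + \<bar>c0\<bar>"
    unfolding gb by (rule abs_triangle_ineq4)
  have B2: "\<bar>\<Sum>j=1..Q. cj j\<bar> \<le> (\<Sum>j=1..Q. \<bar>cj j\<bar>)" by (rule sum_abs)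
  have B3: "(\<Sum>j=1..Q. \<bar>cj j\<bar>) \<le> (\<Sum>j=1..Q. D * \<bar>a\<bar>)" by (rule sum_mono) (rule cj)
  have B4: "(x i + 1) * \<bar>a\<bar> \<le> (3/2) * \<bar>a\<bar>" by (rule mult_right_mono) (use xi in auto)
  have "\<bar>grad_b m Q \<omega> \<theta> x i r\<bar> \<le> 6 * \<bar>a\<bar>"
    using B1 B2 B3 B4 c0 sumD by linarith
  thus "\<bar>grad_b m Q \<omega> \<theta> x i r\<bar> \<le> 6 * \<bar>\<omega> (A i r)\<bar>"
    by (simp add: a_def)
qed



lemma sgd_bound:
  assumes "i \<ge> 1" "Q \<ge> 1" "\<eta> \<ge> 0" "\<And>s. (\<Sum>l=1..i. (xs s l)^2) \<le> 1/4"
  shows "L2_set (fst (sgd m Q \<eta> \<omega> xs t) i r) {1..i+1} \<le> \<eta> * (6 * \<bar>\<omega> (A i r)\<bar>) * real t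
       \<and> \<bar>snd (sgd m Q \<eta> \<omega> xs t) i r\<bar> \<le> \<eta> * (6 * \<bar>\<omega> (A i r)\<bar>) * real t"
proof (induction t)
  case 0
  then show ?case by (simp add: L2_set_0')
next
  case (Suc t)
  define \<theta> where "\<theta> = sgd m Q \<eta> \<omega> xs t"
  define G where "G = 6 * \<bar>\<omega> (A i r)\<bar>"
  have f: "fst (sgd m Q \<eta> \<omega> xs (Suc t)) i r = (\<lambda>k. fst \<theta> i r k - \<eta> * grad_w m Q \<omega> \<theta> (xs t) i r k)"
    by (simp add: \<theta>_def Let_def)
  have s: "snd (sgd m Q \<eta> \<omega> xs (Suc t)) i r = snd \<theta> i r - \<eta> * grad_b m Q \<omega> \<theta> (xs t) i r"
    by (simp add: \<theta>_def Let_def)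
  have g1: "L2_set (grad_w m Q \<omega> \<theta> (xs t) i r) {1..i+1} \<le> G"
    unfolding G_def by (rule grad_bounds(1)[OF assms(1,2,4)])
  have g2: "\<bar>grad_b m Q \<omega> \<theta> (xs t) i r\<bar> \<le> G"
    unfolding G_def by (rule grad_bounds(2)[OF assms(1,2,4)])
  have IH1: "L2_set (fst \<theta> i r) {1..i+1} \<le> \<eta> * G * real t"
    and IH2: "\<bar>snd \<theta> i r\<bar> \<le> \<eta> * G * real t" using Suc.IH by (simp_all add: \<theta>_def G_def)
  have "L2_set (fst (sgd m Q \<eta> \<omega> xs (Suc t)) i r) {1..i+1}
     \<le> L2_set (fst \<theta> i r) {1..i+1} + L2_set (\<lambda>k. \<eta> * grad_w m Q \<omega> \<theta> (xs t) i r k) {1..i+1}"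
    unfolding f by (rule L2_diff)
  also have "\<dots> = L2_set (fst \<theta> i r) {1..i+1} + \<eta> * L2_set (grad_w m Q \<omega> \<theta> (xs t) i r) {1..i+1}"
    using assms(3) by (simp add: L2_scale)
  also have "\<dots> \<le> \<eta> * G * real t + \<eta> * G"
    using IH1 mult_left_mono[OF g1 assms(3)] by linarith
  finally have r1: "L2_set (fst (sgd m Q \<eta> \<omega> xs (Suc t)) i r) {1..i+1} \<le> \<eta> * G * real (Suc t)"
    by (simp add: algebra_simps)
  have "\<bar>snd (sgd m Q \<eta> \<omega> xs (Suc t)) i r\<bar> \<le> \<bar>snd \<theta> i r\<bar> + \<eta> * \<bar>grad_b m Q \<omega> \<theta> (xs t) i r\<bar>"
    unfolding s using assms(3) abs_triangle_ineq4[of "snd \<theta> i r" "\<eta> * grad_b m Q \<omega> \<theta> (xs t) i r"]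
    by (simp add: abs_mult)
  also have "\<dots> \<le> \<eta> * G * real t + \<eta> * G"
    using IH2 mult_left_mono[OF g2 assms(3)] by linarith
  finally have r2: "\<bar>snd (sgd m Q \<eta> \<omega> xs (Suc t)) i r\<bar> \<le> \<eta> * G * real (Suc t)"
    by (simp add: algebra_simps)
  show ?case using r1 r2 by (simp add: G_def)
qed



lemma relu_meas[measurable]: "relu \<in> borel_measurable borel"
  unfolding relu_def by measurable
lemma relu'_meas[measurable]: "relu' \<in> borel_measurable borel"
  unfolding relu'_def by measurable
lemma phi_meas[measurable]: "phi \<in> borel_measurable borel"
  unfolding phi_def by measurable
lemma phi'_meas[measurable]: "phi' \<in> borel_measurable borel"
  unfolding phi'_def by measurable

lemma coord_meas[measurable]: "(\<lambda>\<omega>. \<omega> c) \<in> borel_measurable (init_measure d m eps_a)"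
proof (cases "c \<in> init_coords d m")
  case True
  have "(\<lambda>\<omega>. \<omega> c) \<in> measurable (init_measure d m eps_a)
     ((\<lambda>c. case c of
          A _ _ \<Rightarrow> density lborel (normal_density 0 eps_a)
        | W _ _ _ \<Rightarrow> density lborel (normal_density 0 (1 / sqrt (real m)))
        | B _ _ \<Rightarrow> density lborel (normal_density 0 (1 / sqrt (real m)))) c)"
    unfolding init_measure_def by (rule measurable_component_singleton) fact
  moreover have "sets ((\<lambda>c. case c of
          A _ _ \<Rightarrow> density lborel (normal_density 0 eps_a)
        | W _ _ _ \<Rightarrow> density lborel (normal_density 0 (1 / sqrt (real m)))
        | B _ _ \<Rightarrow> density lborel (normal_density 0 (1 / sqrt (real m)))) c) = sets borel"
    by (cases c) auto
  ultimately show ?thesis using measurable_cong_sets by blast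
next
  case False
  have "\<And>\<omega>. \<omega> \<in> space (init_measure d m eps_a) \<Longrightarrow> \<omega> c = undefined"
    using False by (auto simp: init_measure_def space_PiM PiE_def extensional_def)
  thus ?thesis by (subst measurable_cong[where g="\<lambda>_. undefined"]) auto
qed

lemma sgd_meas:
  "\<forall>i r k. (\<lambda>\<omega>. fst (sgd m Q \<eta> \<omega> xs t) i r k) \<in> borel_measurable (init_measure d m eps_a)
     \<and> (\<lambda>\<omega>. snd (sgd m Q \<eta> \<omega> xs t) i r) \<in> borel_measurable (init_measure d m eps_a)"
proof (induction t)
  case 0 then show ?case by simp
next
  case (Suc t)
  have [measurable]: "\<And>i r k. (\<lambda>\<omega>. fst (sgd m Q \<eta> \<omega> xs t) i r k) \<in> borel_measurable (init_measure d m eps_a)"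
    "\<And>i r. (\<lambda>\<omega>. snd (sgd m Q \<eta> \<omega> xs t) i r) \<in> borel_measurable (init_measure d m eps_a)"
    using Suc by auto
  show ?case
    by (simp add: Let_def grad_w_def grad_b_def Nnet_def preact_def)
qed



lemma init_prob: "eps_a > 0 \<Longrightarrow> m > 0 \<Longrightarrow> prob_space (init_measure d m eps_a)"
  unfolding init_measure_def
  by (rule prob_space_PiM) (auto split: coord.split simp: prob_space_normal_density)

lemma init_distr:
  assumes "c \<in> init_coords d m" "c = A i r" "eps_a > 0" "m > 0"
  shows "distributed (init_measure d m eps_a) lborel (\<lambda>\<omega>. \<omega> c) (\<lambda>x. ennreal (normal_density 0 eps_a x))"
proof -
  let ?Mf = "(\<lambda>c. case c of
          A _ _ \<Rightarrow> density lborel (normal_density 0 eps_a)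
        | W _ _ _ \<Rightarrow> density lborel (normal_density 0 (1 / sqrt (real m)))
        | B _ _ \<Rightarrow> density lborel (normal_density 0 (1 / sqrt (real m))))"
  have "distr (init_measure d m eps_a) lborel (\<lambda>\<omega>. \<omega> c) = distr (init_measure d m eps_a) (?Mf c) (\<lambda>\<omega>. \<omega> c)"
    by (rule distr_cong) (auto simp: assms(2))
  also have "\<dots> = ?Mf c"
    unfolding init_measure_def
    by (rule distr_PiM_component) (auto split: coord.split simp: prob_space_normal_density assms(1,3,4))
  also have "\<dots> = density lborel (\<lambda>x. ennreal (normal_density 0 eps_a x))" by (simp add: assms(2))
  finally show ?thesis unfolding distributed_def by simp
qed

theorem lemma1:
  fixes d m Q :: nat and eps_a \<eta> c1 :: real and i r :: nat
    and xs :: "nat \<Rightarrow> nat \<Rightarrow> real"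
  assumes "d \<ge> 1" and "m \<ge> 2" and "eps_a > 0" and "Q \<ge> 1" and "\<eta> > 0"
    and "i \<in> {1..d}" and "r \<in> {1..m}" and "c1 \<ge> 10"
    and "\<And>s. sqrt (\<Sum>k=1..d. (xs s k)^2) \<le> 1"
    and "\<And>s. sqrt (\<Sum>k=1..i. (xs s k)^2) \<le> 1/2"
  shows "measure (init_measure d m eps_a)
           {\<omega> \<in> space (init_measure d m eps_a).
              \<forall>t. sqrt (\<Sum>k=1..i+1. (fst (sgd m Q \<eta> \<omega> xs t) i r k)^2)
                     \<le> \<eta> * (6 * c1 * eps_a * sqrt (2 * ln (real m))) * real t
                \<and> \<bar>snd (sgd m Q \<eta> \<omega> xs t) i r\<bar>
                     \<le> \<eta> * (6 * c1 * eps_a * sqrt (2 * ln (real m))) * real t}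
         \<ge> 1 - 1 / c1"
proof -
  define M where "M = init_measure d m eps_a"
  interpret prob_space M unfolding M_def by (rule init_prob) (use assms(2,3) in auto)
  define K where "K = c1 * eps_a * sqrt (2 * ln (real m))"
  define X where "X = (\<lambda>\<omega>::coord \<Rightarrow> real. \<omega> (A i r))"
  have i1: "i \<ge> 1" using assms(6) by simp
  have ln2: "ln 2 \<ge> (1/2::real)"
    using ln_le_minus_one[of "1/2::real"] by (simp add: ln_div)
  have lnm: "ln (real m) \<ge> ln 2" using assms(2) by simp
  have Kpos: "K > 0" unfolding K_def using assms(3,8) ln2 lnm by simp
  have xs4: "(\<Sum>l=1..i. (xs s l)^2) \<le> 1/4" for s
    using sqrt_le_D[OF assms(10)[of s]] by (simp add: power_divide)
  define T where "T = {\<omega> \<in> space (init_measure d m eps_a).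
              \<forall>t. sqrt (\<Sum>k=1..i+1. (fst (sgd m Q \<eta> \<omega> xs t) i r k)^2)
                     \<le> \<eta> * (6 * c1 * eps_a * sqrt (2 * ln (real m))) * real t
                \<and> \<bar>snd (sgd m Q \<eta> \<omega> xs t) i r\<bar>
                     \<le> \<eta> * (6 * c1 * eps_a * sqrt (2 * ln (real m))) * real t}"
  have Tsets: "T \<in> events"
  proof -
    have [measurable]: "\<And>t i r k. (\<lambda>\<omega>. fst (sgd m Q \<eta> \<omega> xs t) i r k) \<in> borel_measurable M"
      "\<And>t i r. (\<lambda>\<omega>. snd (sgd m Q \<eta> \<omega> xs t) i r) \<in> borel_measurable M"
      using sgd_meas unfolding M_def by blast+
    show ?thesis unfolding T_def M_def[symmetric] by measurable
  qed
  define E where "E = {\<omega> \<in> space M. \<bar>X \<omega>\<bar> \<le> K}"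
  have ET: "E \<subseteq> T"
  proof
    fix \<omega> assume "\<omega> \<in> E"
    hence sp: "\<omega> \<in> space M" and aK: "\<bar>\<omega> (A i r)\<bar> \<le> K" by (auto simp: E_def X_def)
    show "\<omega> \<in> T" unfolding T_def M_def[symmetric]
    proof (intro CollectI conjI allI sp)
      fix t
      have b: "L2_set (fst (sgd m Q \<eta> \<omega> xs t) i r) {1..i+1} \<le> \<eta> * (6 * \<bar>\<omega> (A i r)\<bar>) * real t
       \<and> \<bar>snd (sgd m Q \<eta> \<omega> xs t) i r\<bar> \<le> \<eta> * (6 * \<bar>\<omega> (A i r)\<bar>) * real t"
        by (rule sgd_bound[OF i1 assms(4)]) (use assms(5) xs4 in auto)
      have "\<eta> * (6 * \<bar>\<omega> (A i r)\<bar>) * real t \<le> \<eta> * (6 * K) * real t"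
        using aK assms(5) by (intro mult_right_mono mult_left_mono) auto
      also have "6 * K = 6 * c1 * eps_a * sqrt (2 * ln (real m))" by (simp add: K_def)
      finally have le: "\<eta> * (6 * \<bar>\<omega> (A i r)\<bar>) * real t \<le> \<eta> * (6 * c1 * eps_a * sqrt (2 * ln (real m))) * real t" .
      show "sqrt (\<Sum>k=1..i+1. (fst (sgd m Q \<eta> \<omega> xs t) i r k)^2)
                     \<le> \<eta> * (6 * c1 * eps_a * sqrt (2 * ln (real m))) * real t"
        "\<bar>snd (sgd m Q \<eta> \<omega> xs t) i r\<bar>
                     \<le> \<eta> * (6 * c1 * eps_a * sqrt (2 * ln (real m))) * real t"
        using b le unfolding L2_set_def by linarith+
    qed
  qed
  have cA: "A i r \<in> init_coords d m" using assms(6,7) by (auto simp: init_coords_def)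
  have D: "distributed M lborel X (\<lambda>x. ennreal (normal_density 0 eps_a x))"
    unfolding M_def X_def by (rule init_distr[OF cA refl]) (use assms(2,3) in auto)
  have [measurable]: "X \<in> borel_measurable M" unfolding X_def M_def by measurable
  have EX: "expectation X = 0" by (rule normal_distributed_expectation[OF assms(3) D])
  have VX: "variance X = eps_a^2" by (rule normal_distributed_variance[OF assms(3) D])
  have int: "integrable M (\<lambda>x. X x ^ 2)"
  proof -
    have "integrable lborel (\<lambda>x. normal_density 0 eps_a x * (x - 0)^2)"
      by (rule integrable_normal_moment) (rule assms(3))
    hence "integrable lborel (\<lambda>x. normal_density 0 eps_a x * (\<lambda>x. x^2) x)" by simp
    thus ?thesis using distributed_integrable[OF D, of "\<lambda>x. x^2"] by simp
  qed
  have cheb: "prob {x\<in>space M. \<bar>X x - expectation X\<bar> \<ge> K} \<le> variance X / K\<^sup>2"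
    by (rule Chebyshev_inequality[OF _ int Kpos]) simp
  have Eev: "E \<in> events" unfolding E_def by measurable
  have compl: "space M - E \<subseteq> {x\<in>space M. \<bar>X x - expectation X\<bar> \<ge> K}"
    unfolding E_def EX by auto
  have "prob (space M - E) \<le> eps_a^2 / K^2"
  proof -
    have Cev: "{x\<in>space M. \<bar>X x - expectation X\<bar> \<ge> K} \<in> events" by measurable
    have "prob (space M - E) \<le> prob {x\<in>space M. \<bar>X x - expectation X\<bar> \<ge> K}"
      by (rule finite_measure_mono[OF compl Cev])
    thus ?thesis using cheb VX by simp
  qed
  also have "eps_a^2 / K^2 \<le> 1 / c1"
  proof -
    have "K^2 = c1^2 * eps_a^2 * (2 * ln (real m))"
      unfolding K_def using ln2 lnm by (simp add: power_mult_distrib)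
    hence "eps_a^2 / K^2 = 1 / (c1^2 * (2 * ln (real m)))" using assms(3) by (simp add: field_simps)
    also have "\<dots> \<le> 1 / c1"
    proof (rule divide_left_mono)
      have "1 * 1 \<le> c1 * (2 * ln (real m))"
        by (rule mult_mono) (use assms(8) ln2 lnm in auto)
      hence "c1 * 1 \<le> c1 * (c1 * (2 * ln (real m)))"
        using assms(8) by (intro mult_left_mono) auto
      thus "c1 \<le> c1^2 * (2 * ln (real m))" by (simp add: power2_eq_square mult.assoc)
    qed (use assms(8) ln2 lnm in auto)
    finally show ?thesis .
  qed
  finally have pc: "prob (space M - E) \<le> 1 / c1" .
  have "prob E = 1 - prob (space M - E)" using prob_compl[OF Eev] by simp
  also have "prob E \<le> prob T" by (rule finite_measure_mono[OF ET Tsets])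
  ultimately show ?thesis using pc unfolding T_def M_def by linarith
qed


end
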